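(* Let $M$ be a pointed metric space such that the set $M'$ of cluster (accumulation) points of $M$ is infinite, and let $X$ be a non-zero Banach space. Then $\mathrm{Lip}_0(M,X)$ has the symmetric strong diameter two property.
   Context: All Banach spaces are real. $\mathrm{Lip}_0(M,X)$ is the Banach space of Lipschitz maps $M\to X$ vanishing at the base point, normed by the best Lipschitz constant. A slice of $B_Z$ is a set $\{z\in B_Z: f(z)>1-\alpha\}$ with $f\in Z^*$, $\alpha>0$. A Banach space $Z$ has the symmetric strong diameter two property (SSD2P) if for every $k\in\mathbb N$, every family of slices $S_1,\dots,S_k$ of $B_Z$ and every $\varepsilon>0$ there exist $x_i\in S_i$ ($1\le i\le k$) and $\varphi\in B_Z$ with $\|\varphi\|>1-\varepsilon$ such that $x_i\pm\varphi\in S_i$ for every $i\in\{1,\dots,k\}$. *)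

theory Defs
  imports "HOL-Analysis.Analysis"
begin

definition Lip0 :: "'a::metric_space \<Rightarrow> ('a \<Rightarrow> 'b::real_normed_vector) set" where
  "Lip0 p = {f. (\<exists>C. C-lipschitz_on UNIV f) \<and> f p = 0}"

definition lipnorm :: "('a::metric_space \<Rightarrow> 'b::real_normed_vector) \<Rightarrow> real" where
  "lipnorm f = Inf {C. C-lipschitz_on UNIV f}"

definition Lip0_ball :: "'a::metric_space \<Rightarrow> ('a \<Rightarrow> 'b::real_normed_vector) set" where
  "Lip0_ball p = {f \<in> Lip0 p. lipnorm f \<le> 1}"

definition Lip0_dual_sphere :: "'a::metric_space \<Rightarrow> (('a \<Rightarrow> 'b::real_normed_vector) \<Rightarrow> real) set" where
  "Lip0_dual_sphere p = {\<phi>.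
     (\<forall>f\<in>Lip0 p. \<forall>g\<in>Lip0 p. \<phi> (\<lambda>x. f x + g x) = \<phi> f + \<phi> g) \<and>
     (\<forall>c. \<forall>f\<in>Lip0 p. \<phi> (\<lambda>x. c *\<^sub>R f x) = c * \<phi> f) \<and>
     (\<exists>K. \<forall>f\<in>Lip0 p. \<bar>\<phi> f\<bar> \<le> K * lipnorm f) \<and>
     (SUP f\<in>Lip0_ball p. \<phi> f) = 1}"

definition Lip0_slice ::
  "'a::metric_space \<Rightarrow> (('a \<Rightarrow> 'b::real_normed_vector) \<Rightarrow> real) \<Rightarrow> real \<Rightarrow> ('a \<Rightarrow> 'b) set" where
  "Lip0_slice p \<phi> \<alpha> = {f \<in> Lip0_ball p. \<phi> f > 1 - \<alpha>}"

definition Lip0_SSD2P :: "'a::metric_space \<Rightarrow> ('a \<Rightarrow> 'b::real_normed_vector) itself \<Rightarrow> bool" where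
  "Lip0_SSD2P p (T :: ('a \<Rightarrow> 'b) itself) \<longleftrightarrow>
     (\<forall>(k::nat) (\<phi>s :: nat \<Rightarrow> ('a \<Rightarrow> 'b) \<Rightarrow> real) (\<alpha>s :: nat \<Rightarrow> real) \<epsilon>.
        (\<forall>i\<in>{1..k}. \<phi>s i \<in> Lip0_dual_sphere p \<and> \<alpha>s i > 0) \<and> \<epsilon> > 0 \<longrightarrow>
        (\<exists>(xs :: nat \<Rightarrow> 'a \<Rightarrow> 'b) (\<psi> :: 'a \<Rightarrow> 'b).
           (\<forall>i\<in>{1..k}. xs i \<in> Lip0_slice p (\<phi>s i) (\<alpha>s i)) \<and>
           \<psi> \<in> Lip0_ball p \<and> lipnorm \<psi> > 1 - \<epsilon> \<and>
           (\<forall>i\<in>{1..k}. (\<lambda>x. xs i x + \<psi> x) \<in> Lip0_slice p (\<phi>s i) (\<alpha>s i) \<and>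
                        (\<lambda>x. xs i x - \<psi> x) \<in> Lip0_slice p (\<phi>s i) (\<alpha>s i))))"

end

theory Submission
  imports Defs
begin


lemma lipnorm_le: "C-lipschitz_on UNIV f \<Longrightarrow> lipnorm f \<le> C"
  unfolding lipnorm_def
  by (rule cInf_lower) (auto intro: bdd_belowI[where m=0] dest: lipschitz_on_nonneg)

lemma lipnorm_nonneg: "C-lipschitz_on UNIV f \<Longrightarrow> 0 \<le> lipnorm f"
  unfolding lipnorm_def
  by (rule cInf_greatest) (auto dest: lipschitz_on_nonneg)

lemma lipnorm_ge1:
  assumes "C-lipschitz_on UNIV f" "dist (f x) (f y) = dist x y" "x \<noteq> y"
  shows "1 \<le> lipnorm f"
  unfolding lipnorm_def
proof (rule cInf_greatest)
  show "{C. C-lipschitz_on UNIV f} \<noteq> {}" using assms by auto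
  fix D assume "D \<in> {C. C-lipschitz_on UNIV f}"
  then have "dist (f x) (f y) \<le> D * dist x y" by (auto dest: lipschitz_onD)
  with assms show "1 \<le> D" by simp
qed

lemma Lip0_ball_lip: "f \<in> Lip0_ball p \<Longrightarrow> 1-lipschitz_on UNIV f"
proof -
  assume f: "f \<in> Lip0_ball p"
  then obtain C where C: "C-lipschitz_on UNIV f" "f p = 0" "lipnorm f \<le> 1"
    by (auto simp: Lip0_ball_def Lip0_def)
  show ?thesis
  proof (rule lipschitz_onI)
    fix x y :: 'a
    have "dist (f x) (f y) \<le> lipnorm f * dist x y"
    proof (cases "x = y")
      case False
      have "dist (f x) (f y) / dist x y \<le> lipnorm f"
        unfolding lipnorm_def
      proof (rule cInf_greatest)
        show "{C. C-lipschitz_on UNIV f} \<noteq> {}" using C by auto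
        fix D assume "D \<in> {C. C-lipschitz_on UNIV f}"
        then have "dist (f x) (f y) \<le> D * dist x y" by (auto dest: lipschitz_onD)
        with False show "dist (f x) (f y) / dist x y \<le> D" by (simp add: divide_simps)
      qed
      with False show ?thesis by (simp add: divide_simps)
    qed simp
    also have "\<dots> \<le> 1 * dist x y" using C(3) by (intro mult_right_mono) auto
    finally show "dist (f x) (f y) \<le> 1 * dist x y" .
  qed simp
qed

lemma Lip0_add: "f \<in> Lip0 p \<Longrightarrow> g \<in> Lip0 p \<Longrightarrow> (\<lambda>x. f x + g x) \<in> Lip0 p"
  unfolding Lip0_def by (auto intro: lipschitz_on_add)

lemma Lip0_scale: "f \<in> Lip0 p \<Longrightarrow> (\<lambda>x. c *\<^sub>R f x) \<in> Lip0 p"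
  unfolding Lip0_def by (auto intro: lipschitz_on_cmult)

lemma Lip0_zero: "(\<lambda>x. 0) \<in> Lip0 p"
  unfolding Lip0_def using lipschitz_on_constant by auto

lemma Lip0_sum: "finite F \<Longrightarrow> (\<And>z. z \<in> F \<Longrightarrow> u z \<in> Lip0 p) \<Longrightarrow> (\<lambda>x. \<Sum>z\<in>F. s z *\<^sub>R u z x) \<in> Lip0 p"
proof (induction F rule: finite_induct)
  case empty then show ?case using Lip0_zero by simp
next
  case (insert a F)
  then show ?case using Lip0_add[OF Lip0_scale[of "u a" p "s a"] insert.IH] by simp
qed

lemma dual_add:
  assumes "\<phi> \<in> Lip0_dual_sphere p" "f \<in> Lip0 p" "g \<in> Lip0 p"
  shows "\<phi> (\<lambda>x. f x + g x) = \<phi> f + \<phi> g"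
proof -
  have "\<forall>f\<in>Lip0 p. \<forall>g\<in>Lip0 p. \<phi> (\<lambda>x. f x + g x) = \<phi> f + \<phi> g"
    using assms(1) unfolding Lip0_dual_sphere_def by blast
  from bspec[OF bspec[OF this assms(2)] assms(3)] show ?thesis .
qed

lemma dual_scale:
  assumes "\<phi> \<in> Lip0_dual_sphere p" "f \<in> Lip0 p"
  shows "\<phi> (\<lambda>x. c *\<^sub>R f x) = c * \<phi> f"
proof -
  have "\<forall>c. \<forall>f\<in>Lip0 p. \<phi> (\<lambda>x. c *\<^sub>R f x) = c * \<phi> f"
    using assms(1) unfolding Lip0_dual_sphere_def by blast
  from bspec[OF spec[OF this, of c] assms(2)] show ?thesis .
qed

lemma dual_sum:
  assumes "\<phi> \<in> Lip0_dual_sphere p" "finite F" "\<And>z. z \<in> F \<Longrightarrow> u z \<in> Lip0 p"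
  shows "\<phi> (\<lambda>x. \<Sum>z\<in>F. s z *\<^sub>R u z x) = (\<Sum>z\<in>F. s z * \<phi> (u z))"
  using assms(2,3)
proof (induction F rule: finite_induct)
  case empty
  have "\<forall>c. \<forall>f\<in>Lip0 p. \<phi> (\<lambda>x. c *\<^sub>R f x) = c * \<phi> f"
    using assms(1) unfolding Lip0_dual_sphere_def by blast
  from bspec[OF spec[OF this, of 0] Lip0_zero[of p]]
  have "\<phi> (\<lambda>x. 0 *\<^sub>R (0::'b)) = 0 * \<phi> (\<lambda>x. 0)" by simp
  then show ?case by simp
next
  case (insert a F)
  have 1: "(\<lambda>x. s a *\<^sub>R u a x) \<in> Lip0 p" using insert by (auto intro: Lip0_scale)
  have 2: "(\<lambda>x. \<Sum>z\<in>F. s z *\<^sub>R u z x) \<in> Lip0 p" using insert by (auto intro: Lip0_sum)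
  have "\<phi> (\<lambda>x. \<Sum>z\<in>insert a F. s z *\<^sub>R u z x) = \<phi> (\<lambda>x. s a *\<^sub>R u a x + (\<Sum>z\<in>F. s z *\<^sub>R u z x))"
    using insert by simp
  also have "\<dots> = \<phi> (\<lambda>x. s a *\<^sub>R u a x) + \<phi> (\<lambda>x. \<Sum>z\<in>F. s z *\<^sub>R u z x)"
    using dual_add[OF assms(1) 1 2] .
  also have "\<phi> (\<lambda>x. s a *\<^sub>R u a x) = s a * \<phi> (u a)"
    using dual_scale[OF assms(1)] insert by simp
  finally show ?case using insert by simp
qed


lemma disj_sum_lip:
  fixes u :: "'a::metric_space \<Rightarrow> 'a \<Rightarrow> 'b::real_normed_vector"
  assumes "finite Z" "\<And>z. z\<in>Z \<Longrightarrow> C-lipschitz_on UNIV (u z)"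
   "\<And>z x. z\<in>Z \<Longrightarrow> u z x \<noteq> 0 \<Longrightarrow> dist x z < R"
   "\<And>z z'. z\<in>Z \<Longrightarrow> z'\<in>Z \<Longrightarrow> z \<noteq> z' \<Longrightarrow> 2*R \<le> dist z z'"
   "\<And>z. z\<in>Z \<Longrightarrow> \<bar>s z\<bar> \<le> 1" "0 \<le> C"
  shows "(2*C)-lipschitz_on UNIV (\<lambda>x. \<Sum>z\<in>Z. s z *\<^sub>R u z x)"
proof (rule lipschitz_onI)
  have card: "card {z\<in>Z. dist x z < R} \<le> 1" for x
  proof -
    have "\<forall>a1\<in>{z\<in>Z. dist x z < R}. \<forall>a2\<in>{z\<in>Z. dist x z < R}. a1 = a2"
    proof (intro ballI, rule ccontr)
      fix a1 a2 assume a: "a1 \<in> {z\<in>Z. dist x z < R}" "a2 \<in> {z\<in>Z. dist x z < R}" "a1 \<noteq> a2"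
      then have "2*R \<le> dist a1 a2" using assms(4) by auto
      moreover have "dist a1 a2 \<le> dist x a1 + dist x a2" by (metis dist_commute dist_triangle)
      ultimately show False using a by auto
    qed
    then show ?thesis using card_le_Suc0_iff_eq[of "{z\<in>Z. dist x z < R}"] assms(1) by simp
  qed
  fix x y :: 'a
  define d where "d = dist x y"
  have trm: "norm (s z *\<^sub>R u z x - s z *\<^sub>R u z y) \<le> (if dist x z < R then C*d else 0) + (if dist y z < R then C*d else 0)"
    if z: "z \<in> Z" for z
  proof -
    have "norm (s z *\<^sub>R u z x - s z *\<^sub>R u z y) = \<bar>s z\<bar> * norm (u z x - u z y)"
      by (metis norm_scaleR scaleR_right_diff_distrib)
    also have "\<dots> \<le> 1 * norm (u z x - u z y)"
      using assms(5)[OF z] by (intro mult_right_mono) auto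
    also have "\<dots> \<le> C * d" using lipschitz_onD[OF assms(2)[OF z], of x y] by (simp add: dist_norm d_def)
    finally have A: "norm (s z *\<^sub>R u z x - s z *\<^sub>R u z y) \<le> C * d" .
    have "0 \<le> C * d" using assms(6) by (simp add: d_def)
    show ?thesis
    proof (cases "dist x z < R \<or> dist y z < R")
      case True then show ?thesis using A \<open>0 \<le> C*d\<close> by auto
    next
      case False
      then have "u z x = 0" "u z y = 0" using assms(3)[OF z] by force+
      then show ?thesis using False by simp
    qed
  qed
  have "dist (\<Sum>z\<in>Z. s z *\<^sub>R u z x) (\<Sum>z\<in>Z. s z *\<^sub>R u z y) = norm (\<Sum>z\<in>Z. s z *\<^sub>R u z x - s z *\<^sub>R u z y)"
    by (simp add: dist_norm sum_subtractf)
  also have "\<dots> \<le> (\<Sum>z\<in>Z. norm (s z *\<^sub>R u z x - s z *\<^sub>R u z y))" by (rule norm_sum)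
  also have "\<dots> \<le> (\<Sum>z\<in>Z. (if dist x z < R then C*d else 0) + (if dist y z < R then C*d else 0))"
    by (rule sum_mono) (rule trm)
  also have "\<dots> = C*d * card {z\<in>Z. dist x z < R} + C*d * card {z\<in>Z. dist y z < R}"
    using assms(1) by (simp add: sum.distrib sum.If_cases Int_def conj_commute)
  also have "\<dots> \<le> C*d * 1 + C*d * 1"
    using card[of x] card[of y] assms(6) by (intro add_mono mult_left_mono) (auto simp: d_def)
  finally show "dist (\<Sum>z\<in>Z. s z *\<^sub>R u z x) (\<Sum>z\<in>Z. s z *\<^sub>R u z y) \<le> 2 * C * dist x y"
    by (simp add: d_def)
qed (use assms in simp)

definition rho :: "real \<Rightarrow> real \<Rightarrow> real \<Rightarrow> real" where
  "rho r c t = min 1 (ln (max t r / r) / c)"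

lemma rho_nonneg: "0 < r \<Longrightarrow> 0 < c \<Longrightarrow> 0 \<le> rho r c t"
  unfolding rho_def by (auto intro!: divide_nonneg_pos ln_ge_zero simp: field_simps)

lemma rho_le1: "rho r c t \<le> 1" unfolding rho_def by simp

lemma rho_zero: "0 < r \<Longrightarrow> t \<le> r \<Longrightarrow> rho r c t = 0"
  unfolding rho_def by (simp add: max_def)

lemma rho_one: "0 < r \<Longrightarrow> 0 < c \<Longrightarrow> r * exp c \<le> t \<Longrightarrow> rho r c t = 1"
proof -
  assume h: "0 < r" "0 < c" "r * exp c \<le> t"
  have "1 \<le> exp c" using h by simp
  then have "r \<le> r * exp c" using h by simp
  then have "r \<le> t" using h by linarith
  have "exp c \<le> t / r" using h by (simp add: field_simps)
  then have "c \<le> ln (t / r)" using h \<open>r \<le> t\<close> by (metis exp_le_cancel_iff exp_ln divide_pos_pos order_less_le_trans)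
  then show ?thesis using h \<open>r \<le> t\<close> unfolding rho_def by (simp add: max_def field_simps)
qed

lemma rho_key:
  assumes "0 < r" "0 < c" "0 \<le> b" "b \<le> a"
  shows "0 \<le> rho r c a - rho r c b" "(rho r c a - rho r c b) * b \<le> (a - b) / c"
proof -
  define A where "A = max a r" define B where "B = max b r"
  have AB: "0 < B" "B \<le> A" "b \<le> B" "A - B \<le> a - b" using assms by (auto simp: A_def B_def max_def)
  have lnAB: "ln (A/r) - ln (B/r) = ln (A / B)" using AB assms by (simp add: ln_div)
  have mono: "ln (B/r) \<le> ln (A/r)" using AB assms by (simp add: divide_right_mono)
  have "rho r c a - rho r c b \<le> ln (A/r)/c - ln (B/r)/c"
    unfolding rho_def A_def[symmetric] B_def[symmetric]
    using mono assms(2) by (smt (verit, best) divide_right_mono)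
  also have "\<dots> = ln (A/B) / c" using lnAB by (metis diff_divide_distrib)
  also have "\<dots> \<le> (A/B - 1) / c" using AB assms by (intro divide_right_mono ln_le_minus_one) auto
  finally have 1: "rho r c a - rho r c b \<le> (A/B - 1)/c" .
  show "0 \<le> rho r c a - rho r c b"
    unfolding rho_def A_def[symmetric] B_def[symmetric]
    using mono assms(2) by (smt (verit, best) divide_right_mono)
  have "(rho r c a - rho r c b) * b \<le> (A/B - 1)/c * b" using 1 assms by (intro mult_right_mono) auto
  also have "\<dots> = (A - B) / c * (b / B)" using AB by (simp add: field_simps)
  also have "\<dots> \<le> (A - B) / c * 1" using AB assms by (intro mult_left_mono) (auto simp: divide_simps)
  also have "\<dots> \<le> (a - b) / c" using AB assms by (simp add: divide_right_mono)
  finally show "(rho r c a - rho r c b) * b \<le> (a - b) / c" .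
qed


lemma flatten_lip:
  fixes f :: "'a::metric_space \<Rightarrow> 'b::real_normed_vector"
  assumes lf: "L-lipschitz_on UNIV f" and r: "0<r" and c: "0<c"
  shows "(L*(1+1/c))-lipschitz_on UNIV (\<lambda>x. f z + rho r c (dist x z) *\<^sub>R (f x - f z))"
proof -
  define g where "g = (\<lambda>x. f z + rho r c (dist x z) *\<^sub>R (f x - f z))"
  have L0: "0 \<le> L" using lipschitz_on_nonneg[OF lf] .
  have aux: "dist (g x) (g y) \<le> L*(1+1/c) * dist x y" if ba: "dist y z \<le> dist x z" for x y
  proof -
    define a where "a = dist x z" define b where "b = dist y z" define d where "d = dist x y"
    have ab: "a - b \<le> d" unfolding a_def b_def d_def by (metis dist_triangle diff_le_eq)
    have k: "0 \<le> rho r c a - rho r c b" "(rho r c a - rho r c b) * b \<le> (a - b) / c"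
      using rho_key[OF r c, of b a] ba by (auto simp: a_def b_def)
    have "g x - g y = rho r c a *\<^sub>R (f x - f y) + (rho r c a - rho r c b) *\<^sub>R (f y - f z)"
      (is "_ = ?E")
      unfolding g_def a_def b_def by (simp add: algebra_simps)
    then have "dist (g x) (g y) \<le> norm (rho r c a *\<^sub>R (f x - f y)) + norm ((rho r c a - rho r c b) *\<^sub>R (f y - f z))"
      unfolding dist_norm by (metis norm_triangle_ineq)
    also have "\<dots> = rho r c a * norm (f x - f y) + (rho r c a - rho r c b) * norm (f y - f z)"
      using rho_nonneg[OF r c, of a] k(1) by simp
    also have "\<dots> \<le> 1 * (L * d) + (rho r c a - rho r c b) * (L * b)"
      using lipschitz_onD[OF lf, of x y] lipschitz_onD[OF lf, of y z] rho_nonneg[OF r c, of a] rho_le1[of r c a] k(1)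
      by (intro add_mono mult_mono) (auto simp: dist_norm d_def b_def)
    also have "\<dots> = L * d + L * ((rho r c a - rho r c b) * b)" by (simp add: algebra_simps)
    also have "\<dots> \<le> L * d + L * ((a - b) / c)" using k(2) L0 by (intro add_left_mono mult_left_mono) auto
    also have "\<dots> \<le> L * d + L * (d / c)" using ab L0 c by (intro add_left_mono mult_left_mono divide_right_mono) auto
    also have "\<dots> = L*(1+1/c) * d" by (simp add: algebra_simps)
    finally show ?thesis by (simp add: d_def)
  qed
  show ?thesis unfolding g_def[symmetric]
  proof (rule lipschitz_onI)
    fix x y :: 'a
    show "dist (g x) (g y) \<le> L * (1 + 1 / c) * dist x y"
      using aux[of y x] aux[of x y] by (cases "dist y z \<le> dist x z") (auto simp: dist_commute)
  qed (use L0 c in auto)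
qed

lemma combine_lip:
  fixes g \<psi> :: "'a::metric_space \<Rightarrow> 'b::real_normed_vector"
  assumes lg: "L'-lipschitz_on UNIV g" and L': "L' \<le> 1 - \<eta>/2" and eta: "0 < \<eta>" "\<eta> \<le> 1/2"
    and gc: "\<And>x. dist x z \<le> r \<Longrightarrow> g x = g z"
    and lp: "1-lipschitz_on UNIV \<psi>" and ps0: "\<And>x. 2*\<tau> \<le> dist x z \<Longrightarrow> \<psi> x = 0"
    and psb: "\<And>x. norm (\<psi> x) \<le> \<tau>" and tau: "0 \<le> \<tau>" "\<tau> \<le> \<eta>*r/8" and r: "0 < r"
    and s: "\<bar>s\<bar> = 1"
  shows "1-lipschitz_on UNIV (\<lambda>x. g x + s *\<^sub>R \<psi> x)"
proof -
  have L0: "0 \<le> L'" using lipschitz_on_nonneg[OF lg] .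
  have "\<eta> * r \<le> (1/2) * r" using eta r by (intro mult_right_mono) auto
  then have er: "\<eta> * r \<le> r/2" by simp
  have t2r: "2*\<tau> \<le> r/4" using tau er by linarith
  have mixed: "dist (g x + s *\<^sub>R \<psi> x) (g y + s *\<^sub>R \<psi> y) \<le> dist x y"
    if x: "dist x z < 2*\<tau>" and y: "r < dist y z" for x y
  proof -
    have "dist y z \<le> dist x y + dist x z" by (metis dist_commute dist_triangle)
    then have dxy: "r/2 \<le> dist x y" using x y t2r r by linarith
    have psy: "\<psi> y = 0" using ps0[of y] y t2r r by linarith
    have "dist (g x + s *\<^sub>R \<psi> x) (g y + s *\<^sub>R \<psi> y) = norm ((g x - g y) + s *\<^sub>R \<psi> x)"
      using psy by (simp add: dist_norm algebra_simps)
    also have "\<dots> \<le> norm (g x - g y) + norm (s *\<^sub>R \<psi> x)" by (rule norm_triangle_ineq)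
    also have "\<dots> \<le> L' * dist x y + \<tau>" using lipschitz_onD[OF lg, of x y] psb[of x] s by (simp add: dist_norm)
    also have "\<dots> \<le> (1 - \<eta>/2) * dist x y + \<eta> * (r/2) / 4"
      using L' tau by (intro add_mono mult_right_mono) auto
    also have "\<dots> \<le> (1 - \<eta>/2) * dist x y + \<eta> * dist x y / 4"
      using dxy eta by (intro add_left_mono divide_right_mono mult_left_mono) auto
    also have "\<dots> \<le> dist x y" using eta by (simp add: algebra_simps)
    finally show ?thesis .
  qed
  show ?thesis
  proof (rule lipschitz_onI)
    fix x y :: 'a
    show "dist (g x + s *\<^sub>R \<psi> x) (g y + s *\<^sub>R \<psi> y) \<le> 1 * dist x y"
    proof (cases "dist x z \<le> r \<and> dist y z \<le> r")
      case True
      then have "dist (g x + s *\<^sub>R \<psi> x) (g y + s *\<^sub>R \<psi> y) = norm (s *\<^sub>R (\<psi> x - \<psi> y))"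
        using gc by (simp add: dist_norm algebra_simps)
      also have "\<dots> = norm (\<psi> x - \<psi> y)" using s by simp
      also have "\<dots> \<le> 1 * dist x y" using lipschitz_onD[OF lp, of x y] by (simp add: dist_norm)
      finally show ?thesis .
    next
      case False
      show ?thesis
      proof (cases "2*\<tau> \<le> dist x z \<and> 2*\<tau> \<le> dist y z")
        case True
        then have "dist (g x + s *\<^sub>R \<psi> x) (g y + s *\<^sub>R \<psi> y) = dist (g x) (g y)" using ps0 by simp
        also have "\<dots> \<le> L' * dist x y" using lipschitz_onD[OF lg, of x y] by simp
        also have "\<dots> \<le> 1 * dist x y" using L' eta by (intro mult_right_mono) auto
        finally show ?thesis .
      next
        case False2: False
        show ?thesis
        proof (cases "dist x z < 2*\<tau>")
          case True
          then have "r < dist y z" using False t2r r by auto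
          then show ?thesis using mixed[OF True] by simp
        next
          case False3: False
          then have "dist y z < 2*\<tau>" using False2 by auto
          moreover have "r < dist x z" using False t2r r \<open>dist y z < 2*\<tau>\<close> by auto
          ultimately show ?thesis using mixed[of y x] by (simp add: dist_commute)
        qed
      qed
    qed
  qed simp
qed

lemma bump_lip:
  fixes e :: "'b::real_normed_vector"
  assumes "norm e = 1"
  shows "1-lipschitz_on UNIV (\<lambda>x. max 0 (\<tau> - dist x w) *\<^sub>R e)"
proof (rule lipschitz_onI)
  fix x y :: 'a
  have "dist (max 0 (\<tau> - dist x w) *\<^sub>R e) (max 0 (\<tau> - dist y w) *\<^sub>R e) = \<bar>max 0 (\<tau> - dist x w) - max 0 (\<tau> - dist y w)\<bar>"
    using assms by (simp add: dist_norm flip: scaleR_left_diff_distrib)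
  also have "\<dots> \<le> \<bar>dist x w - dist y w\<bar>" by (auto simp: max_def)
  also have "\<dots> \<le> dist x y" using abs_dist_diff_le[of x w y] by (simp add: dist_commute)
  finally show "dist (max 0 (\<tau> - dist x w) *\<^sub>R e) (max 0 (\<tau> - dist y w) *\<^sub>R e) \<le> 1 * dist x y" by simp
qed simp


lemma dual_bound:
  assumes "\<phi> \<in> Lip0_dual_sphere p"
  obtains K where "\<forall>f\<in>Lip0 p. \<bar>\<phi> f\<bar> \<le> K * lipnorm f"
  using assms unfolding Lip0_dual_sphere_def by blast

lemma ball_lipnorm: "f \<in> Lip0_ball p \<Longrightarrow> 0 \<le> lipnorm f \<and> lipnorm f \<le> 1 \<and> f \<in> Lip0 p"
  unfolding Lip0_ball_def Lip0_def by (auto intro: lipnorm_nonneg)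

lemma near_sup:
  fixes p :: "'a::metric_space" and \<phi> :: "('a \<Rightarrow> 'b::real_normed_vector) \<Rightarrow> real"
  assumes "\<phi> \<in> Lip0_dual_sphere p" "0 < \<delta>"
  shows "\<exists>f\<in>Lip0_ball p. 1 - \<delta> < \<phi> f \<and> \<phi> f \<le> 1"
proof -
  obtain K where K: "\<forall>f\<in>Lip0 p. \<bar>\<phi> f\<bar> \<le> K * lipnorm f" using dual_bound[OF assms(1)] by blast
  have S: "(SUP f\<in>Lip0_ball p. \<phi> f) = 1" using assms(1) unfolding Lip0_dual_sphere_def by blast
  have z: "(\<lambda>x. 0::'b) \<in> Lip0_ball p"
    using Lip0_zero[of p] lipnorm_le[OF lipschitz_on_constant[of "UNIV::'a set" "0::'b"]]
    unfolding Lip0_ball_def by simp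
  have bdd: "bdd_above (\<phi> ` Lip0_ball p)"
  proof (rule bdd_aboveI2)
    fix f :: "'a \<Rightarrow> 'b" assume f: "f \<in> Lip0_ball p"
    have "\<phi> f \<le> \<bar>\<phi> f\<bar>" by simp
    also have "\<dots> \<le> K * lipnorm f" using K ball_lipnorm[OF f] by blast
    also have "\<dots> \<le> \<bar>K\<bar> * lipnorm f" using ball_lipnorm[OF f] by (intro mult_right_mono) auto
    also have "\<dots> \<le> \<bar>K\<bar> * 1" using ball_lipnorm[OF f] by (intro mult_left_mono) auto
    finally show "\<phi> f \<le> \<bar>K\<bar> * 1" .
  qed
  have "1 - \<delta> < (SUP f\<in>Lip0_ball p. \<phi> f)" using S assms by simp
  then obtain f where f: "f \<in> Lip0_ball p" "1 - \<delta> < \<phi> f"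
    using less_cSUP_iff[of "Lip0_ball p" \<phi> "1-\<delta>"] z bdd by blast
  moreover have "\<phi> f \<le> 1" using cSUP_upper[OF f(1) bdd] S by simp
  ultimately show ?thesis by blast
qed

lemma avg_bound:
  assumes phi: "\<phi> \<in> Lip0_dual_sphere p" and K: "\<forall>f\<in>Lip0 p. \<bar>\<phi> f\<bar> \<le> K * lipnorm f"
    and Z: "finite Z" and u: "\<And>z. z \<in> Z \<Longrightarrow> u z \<in> Lip0 p"
    and lip: "\<And>s. (\<And>z. z\<in>Z \<Longrightarrow> \<bar>s z\<bar> \<le> 1) \<Longrightarrow> C-lipschitz_on UNIV (\<lambda>x. \<Sum>z\<in>Z. s z *\<^sub>R u z x)"
  shows "(\<Sum>z\<in>Z. \<bar>\<phi> (u z)\<bar>) \<le> \<bar>K\<bar> * C"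
proof -
  define s where "s z = sgn (\<phi> (u z))" for z
  have s1: "\<bar>s z\<bar> \<le> 1" for z by (simp add: s_def sgn_real_def)
  have L: "C-lipschitz_on UNIV (\<lambda>x. \<Sum>z\<in>Z. s z *\<^sub>R u z x)" using lip s1 by blast
  have "(\<Sum>z\<in>Z. \<bar>\<phi> (u z)\<bar>) = (\<Sum>z\<in>Z. s z * \<phi> (u z))"
    by (rule sum.cong) (auto simp: s_def abs_sgn)
  also have "\<dots> = \<phi> (\<lambda>x. \<Sum>z\<in>Z. s z *\<^sub>R u z x)" using dual_sum[OF phi Z u] by simp
  also have "\<dots> \<le> \<bar>\<phi> (\<lambda>x. \<Sum>z\<in>Z. s z *\<^sub>R u z x)\<bar>" by simp
  also have "\<dots> \<le> K * lipnorm (\<lambda>x. \<Sum>z\<in>Z. s z *\<^sub>R u z x)" using K Lip0_sum[OF Z, of u p s] u by blast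
  also have "\<dots> \<le> \<bar>K\<bar> * C"
  proof -
    have "0 \<le> lipnorm (\<lambda>x. \<Sum>z\<in>Z. s z *\<^sub>R u z x)" "lipnorm (\<lambda>x. \<Sum>z\<in>Z. s z *\<^sub>R u z x) \<le> C"
      using lipnorm_nonneg[OF L] lipnorm_le[OF L] by auto
    then have "K * lipnorm (\<lambda>x. \<Sum>z\<in>Z. s z *\<^sub>R u z x) \<le> \<bar>K\<bar> * lipnorm (\<lambda>x. \<Sum>z\<in>Z. s z *\<^sub>R u z x)"
      by (intro mult_right_mono) auto
    also have "\<dots> \<le> \<bar>K\<bar> * C" using \<open>lipnorm _ \<le> C\<close> by (intro mult_left_mono) auto
    finally show ?thesis .
  qed
  finally show ?thesis .
qed


lemma in_ball: "C-lipschitz_on UNIV f \<Longrightarrow> C \<le> 1 \<Longrightarrow> f p = 0 \<Longrightarrow> f \<in> Lip0_ball p"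
  unfolding Lip0_ball_def Lip0_def using lipnorm_le[of C f] by auto

lemma in_Lip0: "C-lipschitz_on UNIV f \<Longrightarrow> f p = 0 \<Longrightarrow> f \<in> Lip0 p"
  unfolding Lip0_def by auto

theorem theorem4p5:
  fixes p :: "'a::metric_space"
  assumes "infinite {x::'a. x islimpt (UNIV :: 'a set)}"
    and "\<exists>x::'b::banach. x \<noteq> 0"
  shows "Lip0_SSD2P p TYPE('a \<Rightarrow> 'b)"
  unfolding Lip0_SSD2P_def
proof (intro allI impI)
  fix k :: nat and \<phi>s :: "nat \<Rightarrow> ('a \<Rightarrow> 'b) \<Rightarrow> real" and \<alpha>s :: "nat \<Rightarrow> real" and \<epsilon> :: real
  assume H: "(\<forall>i\<in>{1..k}. \<phi>s i \<in> Lip0_dual_sphere p \<and> 0 < \<alpha>s i) \<and> 0 < \<epsilon>"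
  then have phi: "\<And>i. i \<in> {1..k} \<Longrightarrow> \<phi>s i \<in> Lip0_dual_sphere p"
    and alpha: "\<And>i. i\<in>{1..k} \<Longrightarrow> 0 < \<alpha>s i" and eps: "0 < \<epsilon>" by auto
  obtain e0 :: 'b where e0: "e0 \<noteq> 0" using assms(2) by blast
  define e where "e = (1 / norm e0) *\<^sub>R e0"
  have e: "norm e = 1" using e0 by (simp add: e_def)
  have "\<forall>i\<in>{1..k}. \<exists>K. \<forall>f\<in>Lip0 p. \<bar>\<phi>s i f\<bar> \<le> K * lipnorm f"
    using phi dual_bound by metis
  from bchoice[OF this] obtain K where K: "\<And>i. i\<in>{1..k} \<Longrightarrow> \<forall>f\<in>Lip0 p. \<bar>\<phi>s i f\<bar> \<le> K i * lipnorm f"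
    by blast
  define amin where "amin = Min (insert 1 (\<alpha>s ` {1..k}))"
  have amin3: "amin \<le> \<alpha>s i" if "i\<in>{1..k}" for i
    unfolding amin_def by (rule Min_le) (use that in auto)
  have amin: "0 < amin" "amin \<le> 1" "\<And>i. i\<in>{1..k} \<Longrightarrow> amin \<le> \<alpha>s i"
    using alpha amin3 by (auto simp: amin_def Min_gr_iff)
  define \<eta> where "\<eta> = amin / 4"
  have eta: "0 < \<eta>" "\<eta> \<le> 1/4" "\<And>i. i\<in>{1..k} \<Longrightarrow> \<eta> \<le> \<alpha>s i / 4"
    using amin by (auto simp: \<eta>_def)
  have "\<forall>i\<in>{1..k}. \<exists>f. f \<in> Lip0_ball p \<and> 1 - \<alpha>s i/4 < \<phi>s i f \<and> \<phi>s i f \<le> 1"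
  proof
    fix i assume i: "i \<in> {1..k}"
    have "0 < \<alpha>s i / 4" using alpha[OF i] by simp
    from near_sup[OF phi[OF i] this] show "\<exists>f. f \<in> Lip0_ball p \<and> 1 - \<alpha>s i/4 < \<phi>s i f \<and> \<phi>s i f \<le> 1" by blast
  qed
  from bchoice[OF this] obtain f where f: "\<And>i. i\<in>{1..k} \<Longrightarrow> f i \<in> Lip0_ball p \<and> 1 - \<alpha>s i/4 < \<phi>s i (f i) \<and> \<phi>s i (f i) \<le> 1"
    by blast
  define F where "F i = (\<lambda>x. (1-\<eta>) *\<^sub>R f i x)" for i
  have Flip: "(1-\<eta>)-lipschitz_on UNIV (F i)" if "i\<in>{1..k}" for i
    using lipschitz_on_cmult_nonneg[OF Lip0_ball_lip[OF conjunct1[OF f[OF that]]], of "1-\<eta>"] eta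
    by (simp add: F_def)
  have Fp: "F i p = 0" if "i\<in>{1..k}" for i
    using f[OF that] by (simp add: F_def Lip0_ball_def Lip0_def)
  have FL: "F i \<in> Lip0 p" if "i\<in>{1..k}" for i using in_Lip0[OF Flip[OF that] Fp[OF that]] .
  have Fphi: "1 - \<alpha>s i/2 < \<phi>s i (F i)" if i: "i\<in>{1..k}" for i
  proof -
    have "\<phi>s i (F i) = (1-\<eta>) * \<phi>s i (f i)"
      unfolding F_def using dual_scale[OF phi[OF i]] f[OF i] ball_lipnorm by blast
    moreover have "\<eta> * \<phi>s i (f i) \<le> \<eta>" using f[OF i] eta by (simp add: mult_left_le)
    ultimately show ?thesis using f[OF i] eta(3)[OF i] by (simp add: algebra_simps)
  qed
  define T where "T = (\<Sum>i\<in>{1..k}. 6 * \<bar>K i\<bar>)"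
  define \<beta> where "\<beta> = amin / 2"
  have beta: "0 < \<beta>" "\<And>i. i\<in>{1..k} \<Longrightarrow> \<beta> \<le> \<alpha>s i / 2" using amin by (auto simp: \<beta>_def)
  define N where "N = nat \<lceil>T/\<beta>\<rceil> + 1"
  have NT: "T < real N * \<beta>"
  proof -
    have "T/\<beta> \<le> real (nat \<lceil>T/\<beta>\<rceil>)" by linarith
    then have "T/\<beta> + 1 \<le> real N" by (simp add: N_def)
    then have "(T/\<beta> + 1) * \<beta> \<le> real N * \<beta>" using beta by (intro mult_right_mono) auto
    then show ?thesis using beta by (simp add: algebra_simps)
  qed
  have "infinite ({x::'a. x islimpt UNIV} - {p})" using assms(1) by simp
  then obtain Z where Z: "finite Z" "card Z = N" "Z \<subseteq> {x::'a. x islimpt UNIV} - {p}"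
    using infinite_arbitrarily_large by blast
  have "Z \<noteq> {}" using Z by (auto simp: N_def)
  then obtain z0 where z0: "z0 \<in> Z" by blast
  define D where "D = {(a,b). a \<in> insert p Z \<and> b \<in> insert p Z \<and> a \<noteq> b}"
  define R where "R = Min ((\<lambda>(a,b). dist a b / 3) ` D)"
  have Dfin: "finite D"
    by (rule finite_subset[of _ "insert p Z \<times> insert p Z"]) (auto simp: D_def Z(1))
  have "(p, z0) \<in> D" using z0 Z by (auto simp: D_def)
  then have Dne: "D \<noteq> {}" by blast
  have R: "0 < R" using Dfin Dne by (auto simp: R_def D_def Min_gr_iff)
  have Rd: "3*R \<le> dist a b" if "a \<in> insert p Z" "b \<in> insert p Z" "a \<noteq> b" for a b
  proof -
    have "R \<le> dist a b / 3" unfolding R_def using Dfin that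
      by (intro Min_le) (auto simp: D_def)
    then show ?thesis by simp
  qed
  define c where "c = 2/\<eta>"
  have c: "0 < c" "1/c = \<eta>/2" using eta by (auto simp: c_def)
  define r where "r = R / exp c"
  have r: "0 < r" "r * exp c = R" "r \<le> R" using R c
    by (auto simp: r_def divide_le_eq)
  have "\<forall>z\<in>Z. \<exists>w. w \<noteq> z \<and> dist w z < \<eta>*r/8"
  proof
    fix z assume "z \<in> Z"
    then have "z islimpt UNIV" using Z by auto
    moreover have "0 < \<eta>*r/8" using eta r by simp
    ultimately show "\<exists>w. w \<noteq> z \<and> dist w z < \<eta>*r/8" unfolding islimpt_approachable by blast
  qed
  from bchoice[OF this] obtain w where w: "\<And>z. z\<in>Z \<Longrightarrow> w z \<noteq> z \<and> dist (w z) z < \<eta>*r/8" by blast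
  define \<tau> where "\<tau> z = dist (w z) z" for z
  define \<psi> where "\<psi> z = (\<lambda>x. max 0 (\<tau> z - dist x (w z)) *\<^sub>R e)" for z
  define g where "g i z = (\<lambda>x. F i z + rho r c (dist x z) *\<^sub>R (F i x - F i z))" for i z
  define h where "h i z = (\<lambda>x. F i x - g i z x)" for i z
  have tau: "0 < \<tau> z" "\<tau> z \<le> \<eta>*r/8" "2 * \<tau> z < R" if "z \<in> Z" for z
  proof -
    show "0 < \<tau> z" "\<tau> z \<le> \<eta>*r/8" using w[OF that] by (auto simp: \<tau>_def)
    have er: "\<eta>*r \<le> (1/4) * r" using eta r by (intro mult_right_mono) auto
    show "2 * \<tau> z < R" using w[OF that] r er unfolding \<tau>_def by linarith
  qed
  have pz: "3*R \<le> dist p z" if "z \<in> Z" for z using Rd[of p z] that Z by auto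
  have psi_lip: "1-lipschitz_on UNIV (\<psi> z)" for z unfolding \<psi>_def by (rule bump_lip[OF e])
  have psi_norm: "norm (\<psi> z x) \<le> \<tau> z" if "z\<in>Z" for z x
    using tau[OF that] e by (simp add: \<psi>_def)
  have psi_zero: "\<psi> z x = 0" if "z\<in>Z" "2 * \<tau> z \<le> dist x z" for z x
  proof -
    have "dist x z \<le> dist x (w z) + \<tau> z" unfolding \<tau>_def by (rule dist_triangle)
    then show ?thesis using that by (simp add: \<psi>_def)
  qed
  have psi_supp: "dist x z < R" if "z\<in>Z" "\<psi> z x \<noteq> 0" for z x
    using psi_zero[of z x] tau[of z] that by force
  have psi_p: "\<psi> z p = 0" if "z\<in>Z" for z using psi_zero[OF that] pz[OF that] tau[OF that] R by simp
  have psi_L0: "\<psi> z \<in> Lip0 p" if "z\<in>Z" for z using in_Lip0[OF psi_lip psi_p[OF that]] .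
  have psi_ball: "\<psi> z \<in> Lip0_ball p" if "z\<in>Z" for z using in_ball[OF psi_lip _ psi_p[OF that]] by simp
  have psi_n1: "1 \<le> lipnorm (\<psi> z)" if "z\<in>Z" for z
  proof (rule lipnorm_ge1[OF psi_lip[of z], of "w z" z])
    show "w z \<noteq> z" using w[OF that] by simp
    show "dist (\<psi> z (w z)) (\<psi> z z) = dist (w z) z"
      using tau[OF that] e by (simp add: \<psi>_def \<tau>_def dist_commute dist_norm)
  qed
  have g_lip: "(1 - \<eta>/2)-lipschitz_on UNIV (g i z)" if "i\<in>{1..k}" for i z
  proof -
    have "((1-\<eta>)*(1+1/c))-lipschitz_on UNIV (g i z)"
      unfolding g_def by (rule flatten_lip[OF Flip[OF that] r(1) c(1)])
    moreover have "(1-\<eta>)*(1+1/c) \<le> 1 - \<eta>/2"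
    proof -
      have "(1-\<eta>)*(1+1/c) = 1 - \<eta>/2 - \<eta>*\<eta>/2" unfolding c(2) by (simp add: algebra_simps add_divide_distrib diff_divide_distrib)
      moreover have "0 \<le> \<eta>*\<eta>" by simp
      ultimately show ?thesis by linarith
    qed
    ultimately show ?thesis by (rule lipschitz_on_le)
  qed
  have g_const: "g i z x = g i z z" if "dist x z \<le> r" for i z x
    using that r by (simp add: g_def rho_zero)
  have g_far: "g i z x = F i x" if "R \<le> dist x z" for i z x
    using that r c rho_one[of r c "dist x z"] by (simp add: g_def)
  have g_p: "g i z p = 0" if "i\<in>{1..k}" "z\<in>Z" for i z
    using g_far[of p z i] pz[OF that(2)] R Fp[OF that(1)] by simp
  have g_L0: "g i z \<in> Lip0 p" if "i\<in>{1..k}" "z\<in>Z" for i z using in_Lip0[OF g_lip[OF that(1)] g_p[OF that]] .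
  have h_lip: "2-lipschitz_on UNIV (h i z)" if "i\<in>{1..k}" for i z
  proof -
    have "((1-\<eta>) + (1-\<eta>/2))-lipschitz_on UNIV (h i z)"
      unfolding h_def by (rule lipschitz_on_diff[OF Flip[OF that] g_lip[OF that]])
    then show ?thesis by (rule lipschitz_on_le) (use eta in auto)
  qed
  have h_supp: "dist x z < R" if "h i z x \<noteq> 0" for i z x
    using that g_far[of x z i] by (force simp: h_def)
  have h_L0: "h i z \<in> Lip0 p" if "i\<in>{1..k}" "z\<in>Z" for i z
    using in_Lip0[OF h_lip[OF that(1)]] g_p[OF that] Fp[OF that(1)] by (simp add: h_def)
  have sep: "2*R \<le> dist z z'" if "z\<in>Z" "z'\<in>Z" "z\<noteq>z'" for z z'
    using Rd[of z z'] that R by auto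
  have hsum: "(\<Sum>z\<in>Z. \<bar>\<phi>s i (h i z)\<bar>) \<le> \<bar>K i\<bar> * (2*2)" if i: "i\<in>{1..k}" for i
    by (rule avg_bound[OF phi[OF i] K[OF i] Z(1) h_L0[OF i]], assumption)
       (rule disj_sum_lip[OF Z(1) h_lip[OF i] h_supp sep], auto)
  have psum: "(\<Sum>z\<in>Z. \<bar>\<phi>s i (\<psi> z)\<bar>) \<le> \<bar>K i\<bar> * (2*1)" if i: "i\<in>{1..k}" for i
    by (rule avg_bound[OF phi[OF i] K[OF i] Z(1) psi_L0], assumption)
       (rule disj_sum_lip[OF Z(1) psi_lip psi_supp sep], auto)
  define Q where "Q z = (\<Sum>i\<in>{1..k}. \<bar>\<phi>s i (h i z)\<bar> + \<bar>\<phi>s i (\<psi> z)\<bar>)" for z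
  have "(\<Sum>z\<in>Z. Q z) = (\<Sum>i\<in>{1..k}. (\<Sum>z\<in>Z. \<bar>\<phi>s i (h i z)\<bar>) + (\<Sum>z\<in>Z. \<bar>\<phi>s i (\<psi> z)\<bar>))"
    unfolding Q_def by (subst sum.swap) (simp add: sum.distrib)
  also have "\<dots> \<le> (\<Sum>i\<in>{1..k}. \<bar>K i\<bar> * (2*2) + \<bar>K i\<bar> * (2*1))"
    by (rule sum_mono) (intro add_mono hsum psum; simp)
  also have "\<dots> = T" by (simp add: T_def algebra_simps)
  finally have QT: "(\<Sum>z\<in>Z. Q z) \<le> T" .
  have "\<exists>z\<in>Z. Q z < \<beta>"
  proof (rule ccontr)
    assume "\<not> (\<exists>z\<in>Z. Q z < \<beta>)"
    then have "of_nat (card Z) * \<beta> \<le> (\<Sum>z\<in>Z. Q z)" by (intro sum_bounded_below) auto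
    then show False using QT NT Z(2) by simp
  qed
  then obtain z where z: "z \<in> Z" "Q z < \<beta>" by blast
  have each: "\<bar>\<phi>s i (h i z)\<bar> + \<bar>\<phi>s i (\<psi> z)\<bar> < \<beta>" if i: "i\<in>{1..k}" for i
  proof -
    have "\<bar>\<phi>s i (h i z)\<bar> + \<bar>\<phi>s i (\<psi> z)\<bar> \<le> Q z"
      unfolding Q_def by (rule member_le_sum[OF i]) auto
    then show ?thesis using z by simp
  qed
  have gphi: "\<phi>s i (F i) = \<phi>s i (g i z) + \<phi>s i (h i z)" if i: "i\<in>{1..k}" for i
  proof -
    have "F i = (\<lambda>x. g i z x + h i z x)" by (simp add: h_def)
    then show ?thesis using dual_add[OF phi[OF i] g_L0[OF i z(1)] h_L0[OF i z(1)]] by simp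
  qed
  have comb: "1-lipschitz_on UNIV (\<lambda>x. g i z x + s *\<^sub>R \<psi> z x)" if i: "i\<in>{1..k}" and s: "\<bar>s\<bar> = 1" for i s
    by (rule combine_lip[OF g_lip[OF i] _ eta(1) _ g_const psi_lip _ psi_norm[OF z(1)] _ tau(2)[OF z(1)] r(1) s])
       (use eta tau[OF z(1)] psi_zero[OF z(1)] in auto)
  have slice: "(\<lambda>x. g i z x + s *\<^sub>R \<psi> z x) \<in> Lip0_slice p (\<phi>s i) (\<alpha>s i)" if i: "i\<in>{1..k}" and s: "\<bar>s\<bar> = 1" for i s
  proof -
    have val: "\<phi>s i (\<lambda>x. g i z x + s *\<^sub>R \<psi> z x) = \<phi>s i (g i z) + s * \<phi>s i (\<psi> z)"
      using dual_add[OF phi[OF i] g_L0[OF i z(1)] Lip0_scale[OF psi_L0[OF z(1)], of s]]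
        dual_scale[OF phi[OF i] psi_L0[OF z(1)], of s] by simp
    have "s = 1 \<or> s = -1" using s by (auto simp: abs_if split: if_splits)
    then have "s * \<phi>s i (\<psi> z) \<ge> - \<bar>\<phi>s i (\<psi> z)\<bar>" by auto
    moreover have "\<phi>s i (h i z) \<le> \<bar>\<phi>s i (h i z)\<bar>" by simp
    ultimately have "1 - \<alpha>s i < \<phi>s i (\<lambda>x. g i z x + s *\<^sub>R \<psi> z x)"
      using val gphi[OF i] Fphi[OF i] each[OF i] beta(2)[OF i] by linarith
    moreover have "(\<lambda>x. g i z x + s *\<^sub>R \<psi> z x) \<in> Lip0_ball p"
      using in_ball[OF comb[OF i s] order_refl] g_p[OF i z(1)] psi_p[OF z(1)] by simp
    ultimately show ?thesis unfolding Lip0_slice_def by simp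
  qed
  show "\<exists>xs \<psi>'. (\<forall>i\<in>{1..k}. xs i \<in> Lip0_slice p (\<phi>s i) (\<alpha>s i)) \<and>
           \<psi>' \<in> Lip0_ball p \<and> 1 - \<epsilon> < lipnorm \<psi>' \<and>
           (\<forall>i\<in>{1..k}. (\<lambda>x. xs i x + \<psi>' x) \<in> Lip0_slice p (\<phi>s i) (\<alpha>s i) \<and>
                        (\<lambda>x. xs i x - \<psi>' x) \<in> Lip0_slice p (\<phi>s i) (\<alpha>s i))"
  proof (intro exI[of _ "\<lambda>i. g i z"] exI[of _ "\<psi> z"] conjI ballI)
    fix i assume i: "i \<in> {1..k}"
    have "\<phi>s i (g i z) \<ge> \<phi>s i (F i) - \<bar>\<phi>s i (h i z)\<bar>" using gphi[OF i] by linarith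
    then have "1 - \<alpha>s i < \<phi>s i (g i z)" using Fphi[OF i] each[OF i] beta(2)[OF i] by linarith
    moreover have "g i z \<in> Lip0_ball p" using in_ball[OF g_lip[OF i] _ g_p[OF i z(1)]] eta by simp
    ultimately show "g i z \<in> Lip0_slice p (\<phi>s i) (\<alpha>s i)" unfolding Lip0_slice_def by simp
    show "(\<lambda>x. g i z x + \<psi> z x) \<in> Lip0_slice p (\<phi>s i) (\<alpha>s i)" using slice[OF i, of 1] by simp
    show "(\<lambda>x. g i z x - \<psi> z x) \<in> Lip0_slice p (\<phi>s i) (\<alpha>s i)" using slice[OF i, of "-1"] by simp
  next
    show "\<psi> z \<in> Lip0_ball p" using psi_ball[OF z(1)] .
    show "1 - \<epsilon> < lipnorm (\<psi> z)" using psi_n1[OF z(1)] eps by simp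
  qed
qed

end
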